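(* Let $0<p_1\le p_2\le1$ and let $X_1,X_2,Y_1,Y_2$ be independent random variables with $X_1$ geometric with success probability $p_1$, $X_2$ geometric with success probability $p_2$, and $Y_1,Y_2$ geometric with success probability $(p_1+p_2)/2$. Then for every positive integer $j$, $$\mathbb{P}(X_1+X_2>j)\ge\mathbb{P}(Y_1+Y_2>j).$$
   Context: A random variable $Y$ is geometric with success probability $p$ if $\mathbb{P}(Y=s)=(1-p)^{s-1}p$ for $s=1,2,\dots$. *)

theory Defs
  imports "HOL-Probability.Probability"
begin

definition is_geometric :: "'a measure \<Rightarrow> ('a \<Rightarrow> nat) \<Rightarrow> real \<Rightarrow> bool" where
  "is_geometric M Y p \<longleftrightarrow>
     Y \<in> measurable M (count_space UNIV) \<and>
     (\<forall>s::nat. s \<ge> 1 \<longrightarrow> measure M {x \<in> space M. Y x = s} = (1 - p) ^ (s - 1) * p)"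

end

theory Submission
  imports Defs
begin


definition HH :: "real \<Rightarrow> real \<Rightarrow> nat \<Rightarrow> real" where
  "HH a b j = (\<Sum>k<j. a^k * b^(j-1-k))"
definition FF :: "real \<Rightarrow> real \<Rightarrow> nat \<Rightarrow> real" where
  "FF a b j = a^j + (1-a) * HH a b j"

lemma HH_Suc1: "HH a b (Suc j) = a * HH a b j + b^j"
proof -
  have "HH a b (Suc j) = a^0 * b^(Suc j - 1 - 0) + (\<Sum>k<j. a^Suc k * b^(Suc j-1-Suc k))"
    unfolding HH_def by (rule sum.lessThan_Suc_shift)
  also have "\<dots> = b^j + a * HH a b j"
    unfolding HH_def by (simp add: sum_distrib_left mult_ac)
  finally show ?thesis by simp
qed

lemma HH_Suc2: "HH a b (Suc j) = b * HH a b j + a^j"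
proof -
  have "(\<Sum>k<j. a^k * b^(Suc j-1-k)) = (\<Sum>k<j. b * (a^k * b^(j-1-k)))"
  proof (rule sum.cong)
    fix k assume "k \<in> {..<j}"
    then have "Suc j - 1 - k = Suc (j-1-k)" by auto
    then show "a^k * b^(Suc j-1-k) = b * (a^k * b^(j-1-k))" by simp
  qed simp
  then show ?thesis unfolding HH_def
    by (simp add: sum_distrib_left)
qed

lemma FF_rec: "FF a b (Suc j) = (a+b)/2 * FF a b j + ((1-a)*b^j + (1-b)*a^j)/2"
proof -
  have 1: "FF a b (Suc j) = a * FF a b j + (1-a)*b^j"
    unfolding FF_def HH_Suc1 by (simp add: algebra_simps)
  have 2: "FF a b (Suc j) = b * FF a b j + (1-b)*a^j"
    unfolding FF_def
    using HH_Suc2[of a b j] HH_Suc1[of a b j] by (simp add: algebra_simps)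
  show ?thesis using 1 2 by (simp add: field_simps)
qed

lemma cheb: fixes a b :: real assumes "0 \<le> a" "0 \<le> b" shows "0 \<le> (a-b)*(a^n - b^n)"
proof (cases "a \<le> b")
  case True
  then have "a^n \<le> b^n" using assms by (simp add: power_mono)
  then show ?thesis using True by (simp add: mult_nonpos_nonpos)
next
  case False
  then have "b^n \<le> a^n" using assms by (simp add: power_mono)
  then show ?thesis using False by simp
qed

lemma jensen: fixes a b :: real assumes "0 \<le> a" "0 \<le> b"
  shows "2*((a+b)/2)^n \<le> a^n + b^n"
proof (induction n)
  case 0 then show ?case by simp
next
  case (Suc n)
  have c: "0 \<le> (a+b)/2" using assms by simp
  have "2*((a+b)/2)^Suc n = (a+b)/2 * (2*((a+b)/2)^n)" by simp
  also have "\<dots> \<le> (a+b)/2 * (a^n+b^n)" using Suc c by (rule mult_left_mono)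
  also have "\<dots> \<le> a^Suc n + b^Suc n"
    using cheb[OF assms, of n] by (simp add: algebra_simps)
  finally show ?case .
qed

lemma Eineq: fixes a b :: real assumes "0 \<le> a" "a \<le> 1" "0 \<le> b" "b \<le> 1"
  shows "2*(1-(a+b)/2)*((a+b)/2)^n \<le> (1-a)*b^n + (1-b)*a^n"
proof -
  define c where "c = (a+b)/2"
  define S where "S = (\<lambda>n. a^n + b^n)"
  have id: "(1-a)*b^n + (1-b)*a^n = (1 - 2*c)*S n + S (Suc n)"
    unfolding c_def S_def by (simp add: algebra_simps)
  have J: "2*c^n \<le> S n" using jensen[OF assms(1,3)] unfolding c_def S_def by simp
  have C: "c * S n \<le> S (Suc n)" using cheb[OF assms(1,3), of n] unfolding c_def S_def
    by (simp add: algebra_simps)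
  have c1: "c \<le> 1" unfolding c_def using assms by simp
  have "(1-c)*(S n - 2*c^n) \<ge> 0" using J c1 by simp
  then have "2*(1-c)*c^n \<le> (1 - 2*c)*S n + S (Suc n)" using C by (simp add: algebra_simps)
  then show ?thesis unfolding c_def[symmetric] id by simp
qed

lemma FF_main: fixes a b :: real assumes "0 \<le> a" "a \<le> 1" "0 \<le> b" "b \<le> 1"
  shows "FF ((a+b)/2) ((a+b)/2) j \<le> FF a b j"
proof (induction j)
  case 0 then show ?case by (simp add: FF_def HH_def)
next
  case (Suc j)
  define c where "c = (a+b)/2"
  have c0: "0 \<le> c" unfolding c_def using assms by simp
  have r1: "FF c c (Suc j) = c * FF c c j + (1-c)*c^j"
    using FF_rec[of c c j] by (simp add: field_simps)
  have r2: "FF a b (Suc j) = c * FF a b j + ((1-a)*b^j + (1-b)*a^j)/2"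
    using FF_rec[of a b j] unfolding c_def by simp
  have h1: "c * FF c c j \<le> c * FF a b j"
    using mult_left_mono[OF Suc[folded c_def] c0] .
  have h2: "2*(1-c)*c^j \<le> (1-a)*b^j + (1-b)*a^j"
    using Eineq[OF assms, of j] unfolding c_def .
  then have h2': "(1-c)*c^j \<le> ((1-a)*b^j + (1-b)*a^j)/2" by (simp add: algebra_simps)
  have "FF c c (Suc j) \<le> FF a b (Suc j)" using r1 r2 h1 h2' by linarith
  then show ?case unfolding c_def .
qed


lemma geom_sum: "(\<Sum>s\<in>{1..N}. (1-p)^(s-1)*p) = 1 - (1-p)^N" for p :: real
  by (induction N) (auto simp: algebra_simps)

lemma meas_set: "X \<in> measurable M (count_space UNIV) \<Longrightarrow> {x\<in>space M. P (X x)} \<in> sets M"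
proof -
  assume X: "X \<in> measurable M (count_space UNIV)"
  have "X -` {n. P n} \<inter> space M \<in> sets M" by (rule measurable_sets[OF X]) simp
  moreover have "X -` {n. P n} \<inter> space M = {x\<in>space M. P (X x)}" by auto
  ultimately show ?thesis by simp
qed

context prob_space begin

lemma sum_le_union:
  assumes X: "X \<in> measurable M (count_space UNIV)" and fin: "finite S"
  shows "measure M {x\<in>space M. X x \<in> S} = (\<Sum>s\<in>S. measure M {x\<in>space M. X x = s})"
proof -
  have "measure M (\<Union>s\<in>S. {x\<in>space M. X x = s}) = (\<Sum>s\<in>S. measure M {x\<in>space M. X x = s})"
    using fin meas_set[OF X] by (intro finite_measure_finite_Union) (auto simp: disjoint_family_on_def)
  moreover have "(\<Union>s\<in>S. {x\<in>space M. X x = s}) = {x\<in>space M. X x \<in> S}" by auto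
  ultimately show ?thesis by simp
qed

lemma geom_zero:
  assumes g: "is_geometric M X p" and p: "0 < p" "p \<le> 1"
  shows "measure M {x\<in>space M. X x = 0} = 0"
proof -
  have X: "X \<in> measurable M (count_space UNIV)" using g unfolding is_geometric_def by simp
  have bound: "measure M {x\<in>space M. X x = 0} \<le> (1-p)^N" for N
  proof -
    have "measure M {x\<in>space M. X x \<in> {0..N}} = (\<Sum>s\<in>{0..N}. measure M {x\<in>space M. X x = s})"
      by (rule sum_le_union[OF X]) simp
    also have "\<dots> = measure M {x\<in>space M. X x = 0} + (\<Sum>s\<in>{1..N}. measure M {x\<in>space M. X x = s})"
      by (subst sum.atLeast_Suc_atMost) auto
    also have "(\<Sum>s\<in>{1..N}. measure M {x\<in>space M. X x = s}) = (\<Sum>s\<in>{1..N}. (1-p)^(s-1)*p)"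
      using g unfolding is_geometric_def by (intro sum.cong) auto
    also have "\<dots> = 1 - (1-p)^N" by (rule geom_sum)
    finally have "measure M {x\<in>space M. X x = 0} + (1 - (1-p)^N) \<le> 1"
      using prob_le_1 by metis
    then show ?thesis by simp
  qed
  have lim: "(\<lambda>N. (1-p)^N) \<longlonglongrightarrow> 0" using p by (intro LIMSEQ_power_zero) auto
  have "measure M {x\<in>space M. X x = 0} \<le> 0"
    by (rule LIMSEQ_le_const[OF lim]) (use bound in auto)
  then show ?thesis using measure_nonneg[of M] by (meson antisym)
qed

lemma geom_le:
  assumes g: "is_geometric M X p" and p: "0 < p" "p \<le> 1"
  shows "measure M {x\<in>space M. X x \<le> m} = 1 - (1-p)^m"
proof -
  have X: "X \<in> measurable M (count_space UNIV)" using g unfolding is_geometric_def by simp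
  have "measure M {x\<in>space M. X x \<le> m} = measure M {x\<in>space M. X x \<in> {0..m}}" by simp
  also have "\<dots> = (\<Sum>s\<in>{0..m}. measure M {x\<in>space M. X x = s})"
    by (rule sum_le_union[OF X]) simp
  also have "\<dots> = measure M {x\<in>space M. X x = 0} + (\<Sum>s\<in>{1..m}. measure M {x\<in>space M. X x = s})"
    by (subst sum.atLeast_Suc_atMost) auto
  also have "(\<Sum>s\<in>{1..m}. measure M {x\<in>space M. X x = s}) = (\<Sum>s\<in>{1..m}. (1-p)^(s-1)*p)"
    using g unfolding is_geometric_def by (intro sum.cong) auto
  also have "\<dots> = 1 - (1-p)^m" by (rule geom_sum)
  finally show ?thesis using geom_zero[OF g p] by simp
qed

lemma indep_pair:
  assumes ind: "indep_vars (\<lambda>_. count_space UNIV) Z I" and ik: "i \<in> I" "k \<in> I" "i \<noteq> k"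
  shows "measure M {x\<in>space M. Z i x \<in> A \<and> Z k x \<in> B} =
    measure M {x\<in>space M. Z i x \<in> A} * measure M {x\<in>space M. Z k x \<in> B}"
proof -
  have isd: "indep_sets (\<lambda>l. {Z l -` A \<inter> space M | A. A \<in> sets (count_space UNIV)}) I"
    using ind unfolding indep_vars_def2 by simp
  define F where "F = (\<lambda>l. if l = i then Z i -` A \<inter> space M else Z k -` B \<inter> space M)"
  have "prob (\<Inter>l\<in>{i,k}. F l) = (\<Prod>l\<in>{i,k}. prob (F l))"
    by (rule indep_setsD[OF isd]) (use ik in \<open>auto simp: F_def\<close>)
  then have "prob (F i \<inter> F k) = prob (F i) * prob (F k)" using ik by simp
  moreover have "F i \<inter> F k = {x\<in>space M. Z i x \<in> A \<and> Z k x \<in> B}" using ik by (auto simp: F_def)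
  moreover have "F i = {x\<in>space M. Z i x \<in> A}" by (auto simp: F_def)
  moreover have "F k = {x\<in>space M. Z k x \<in> B}" using ik by (auto simp: F_def)
  ultimately show ?thesis by simp
qed

end


lemma geo_lt: "(1-a) * (\<Sum>k<j. a^k) = 1 - a^j" for a :: real
  using one_diff_power_eq[of a j] by simp


lemma closed_form: fixes pu b :: real
  shows "(\<Sum>s\<in>{1..j}. (1-pu)^(s-1)*pu * (1 - b^(j-s))) = 1 - FF (1-pu) b j"
proof -
  define a where "a = 1 - pu"
  have pu: "pu = 1 - a" unfolding a_def by simp
  have "(\<Sum>s\<in>{1..j}. (1-pu)^(s-1)*pu * (1 - b^(j-s))) = (\<Sum>k<j. (1-pu)^(Suc k-1)*pu * (1 - b^(j-Suc k)))"
    by (rule sum_bounds_lt_plus1[symmetric])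
  also have "\<dots> = (\<Sum>k<j. (1-a) * a^k - (1-a) * (a^k * b^(j-1-k)))"
    unfolding pu by (intro sum.cong) (auto simp: algebra_simps)
  also have "\<dots> = (1-a) * (\<Sum>k<j. a^k) - (1-a) * HH a b j"
    unfolding HH_def by (simp add: sum_subtractf sum_distrib_left)
  also have "\<dots> = 1 - FF a b j" unfolding FF_def geo_lt by simp
  finally show ?thesis unfolding a_def .
qed

context prob_space begin

lemma sum_tail:
  assumes ind: "indep_vars (\<lambda>_. count_space UNIV) Z I" and ik: "i \<in> I" "k \<in> I" "i \<noteq> k"
    and gi: "is_geometric M (Z i) pu" and gk: "is_geometric M (Z k) pv"
    and pu: "0 < pu" "pu \<le> 1" and pv: "0 < pv" "pv \<le> 1"
  shows "measure M {x\<in>space M. Z i x + Z k x > j} = FF (1-pu) (1-pv) j"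
proof -
  have Xi: "Z i \<in> measurable M (count_space UNIV)" using gi unfolding is_geometric_def by simp
  have Xk: "Z k \<in> measurable M (count_space UNIV)" using gk unfolding is_geometric_def by simp
  define A where "A = (\<lambda>s. {x\<in>space M. Z i x \<in> {s} \<and> Z k x \<in> {..j-s}})"
  have Ameas: "A s \<in> sets M" for s
  proof -
    have "A s = {x\<in>space M. Z i x = s} \<inter> {x\<in>space M. Z k x \<le> j - s}" unfolding A_def by auto
    moreover have "{x\<in>space M. Z i x = s} \<inter> {x\<in>space M. Z k x \<le> j - s} \<in> sets M"
      by (rule sets.Int[OF meas_set[OF Xi] meas_set[OF Xk]])
    ultimately show ?thesis by simp
  qed
  have U: "{x\<in>space M. Z i x + Z k x \<le> j} = (\<Union>s\<in>{0..j}. A s)" unfolding A_def by auto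
  have "measure M {x\<in>space M. Z i x + Z k x \<le> j} = (\<Sum>s\<in>{0..j}. measure M (A s))"
    unfolding U using Ameas by (intro finite_measure_finite_Union) (auto simp: disjoint_family_on_def A_def)
  also have "\<dots> = (\<Sum>s\<in>{0..j}. measure M {x\<in>space M. Z i x = s} * (1 - (1-pv)^(j-s)))"
  proof (rule sum.cong[OF refl])
    fix s
    have "measure M (A s) = measure M {x\<in>space M. Z i x \<in> {s}} * measure M {x\<in>space M. Z k x \<in> {..j-s}}"
      unfolding A_def by (rule indep_pair[OF ind ik])
    moreover have "{x\<in>space M. Z i x \<in> {s}} = {x\<in>space M. Z i x = s}" by simp
    moreover have "{x\<in>space M. Z k x \<in> {..j-s}} = {x\<in>space M. Z k x \<le> j-s}" by simp
    ultimately show "measure M (A s) = measure M {x\<in>space M. Z i x = s} * (1 - (1-pv)^(j-s))"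
      using geom_le[OF gk pv, of "j-s"] by simp
  qed
  also have "\<dots> = (\<Sum>s\<in>{1..j}. measure M {x\<in>space M. Z i x = s} * (1 - (1-pv)^(j-s)))"
    using geom_zero[OF gi pu] by (subst sum.atLeast_Suc_atMost) auto
  also have "\<dots> = (\<Sum>s\<in>{1..j}. (1-pu)^(s-1)*pu * (1 - (1-pv)^(j-s)))"
    using gi unfolding is_geometric_def by (intro sum.cong) auto
  also have "\<dots> = 1 - FF (1-pu) (1-pv) j" by (rule closed_form)
  finally have le: "measure M {x\<in>space M. Z i x + Z k x \<le> j} = 1 - FF (1-pu) (1-pv) j" .
  have "{x\<in>space M. Z i x + Z k x > j} = space M - {x\<in>space M. Z i x + Z k x \<le> j}" by auto
  moreover have "{x\<in>space M. Z i x + Z k x \<le> j} \<in> sets M"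
    unfolding U by (rule sets.finite_UN) (auto simp: Ameas)
  ultimately show ?thesis using le finite_measure_compl prob_space by simp
qed

end

theorem lemmaB3:
  fixes M :: "'a measure" and X1 X2 Y1 Y2 :: "'a \<Rightarrow> nat" and p1 p2 :: real and j :: nat
  assumes "prob_space M"
    and "0 < p1" and "p1 \<le> p2" and "p2 \<le> 1"
    and "prob_space.indep_vars M (\<lambda>_. count_space UNIV) (\<lambda>i. [X1, X2, Y1, Y2] ! i) {0..<4}"
    and "is_geometric M X1 p1" and "is_geometric M X2 p2"
    and "is_geometric M Y1 ((p1 + p2) / 2)" and "is_geometric M Y2 ((p1 + p2) / 2)"
    and "j \<ge> 1"
  shows "measure M {x \<in> space M. X1 x + X2 x > j} \<ge> measure M {x \<in> space M. Y1 x + Y2 x > j}"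
proof -
  interpret prob_space M by fact
  let ?Z = "\<lambda>i. [X1, X2, Y1, Y2] ! i"
  have g0: "is_geometric M (?Z 0) p1" using assms(6) by simp
  have g1: "is_geometric M (?Z 1) p2" using assms(7) by simp
  have g2: "is_geometric M (?Z 2) ((p1 + p2) / 2)" using assms(8) by simp
  have g3: "is_geometric M (?Z 3) ((p1 + p2) / 2)" using assms(9) by simp
  have i0: "(0::nat) \<in> {0..<4}" and i1: "(1::nat) \<in> {0..<4}" and i2: "(2::nat) \<in> {0..<4}"
    and i3: "(3::nat) \<in> {0..<4}" by auto
  have q1: "0 < p1" "p1 \<le> 1" "0 < p2" "p2 \<le> 1" using assms(2,3,4) by linarith+
  have q2a: "0 < (p1+p2)/2" using q1 by simp
  have q2b: "(p1+p2)/2 \<le> 1" using q1 by simp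
  note q2 = q2a q2b
  have L0: "measure M {x \<in> space M. ?Z 0 x + ?Z 1 x > j} = FF (1-p1) (1-p2) j"
    by (rule sum_tail[OF assms(5) i0 i1 _ g0 g1 q1]) simp
  have R0: "measure M {x \<in> space M. ?Z 2 x + ?Z 3 x > j} = FF (1-(p1+p2)/2) (1-(p1+p2)/2) j"
    by (rule sum_tail[OF assms(5) i2 i3 _ g2 g3 q2 q2]) simp
  have L: "measure M {x \<in> space M. X1 x + X2 x > j} = FF (1-p1) (1-p2) j"
    using L0 by simp
  have R: "measure M {x \<in> space M. Y1 x + Y2 x > j} = FF (1-(p1+p2)/2) (1-(p1+p2)/2) j"
    using R0 by simp
  have e: "1-(p1+p2)/2 = ((1-p1)+(1-p2))/2" by (simp add: field_simps)
  have "FF (1-(p1+p2)/2) (1-(p1+p2)/2) j \<le> FF (1-p1) (1-p2) j"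
    unfolding e by (rule FF_main) (use q1 in auto)
  then show ?thesis unfolding L R .
qed

end
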